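(* Let $(\bar z_1,\bar z_2)\in\mathbb R^d\times\mathbb R^d$. Then $(\bar z_1,\bar z_2)\in \operatorname{Fix} T_{\gamma}^{\mathrm{Ryu}} := \{(z_1,z_2): (z_1,z_2)\in T_{\gamma}^{\mathrm{Ryu}}(z_1,z_2)\}$ if and only if $\bar x := \bar x_1=\bar x_2=\bar x_3$, where $$\bar x_1=\operatorname{prox}_{\gamma f_1}(\bar z_1),\quad \bar x_2=\operatorname{prox}_{\frac{\gamma}{\alpha} f_2}\Big(\tfrac{\bar z_2}{\alpha}+\bar x_1\Big),\quad \bar x_3\in \operatorname{prox}_{\gamma f_3}(\bar x_1-\bar z_1+\bar x_2-\bar z_2).$$ Furthermore, such $\bar x$ is a critical point of $\varphi$ (i.e. $0\in\partial\varphi(\bar x)$), and $\varphi(\bar x)=\varphi_{\gamma}^{\mathrm{Ryu}}(\bar z_1,\bar z_2)$. In particular, if $\alpha\in(0,1)$ and $\gamma\le \min\{\frac{\alpha}{L_1},\frac{1-\alpha}{L_2}\}$, then $\min\varphi=\min\varphi_{\gamma}^{\mathrm{Ryu}}$.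
   Context: Let $f_1,f_2:\mathbb R^d\to\mathbb R$ be convex and $L_i$-smooth (i.e. differentiable with $\nabla f_i$ globally $L_i$-Lipschitz, $L_i>0$), let $f_3:\mathbb R^d\to\mathbb R\cup\{+\infty\}$ be proper and lower semicontinuous, and suppose the problem $\min_{x\in\mathbb R^d}\varphi(x):=f_1(x)+f_2(x)+f_3(x)$ has a nonempty set of solutions. For a function $g$ and $\gamma>0$, $\operatorname{prox}_{\gamma g}(z):=\operatorname{argmin}_{y}\{g(y)+\frac{1}{2\gamma}\|y-z\|^2\}$. Let $\gamma\in(0,\frac{1}{L_1+L_2})$ and $\alpha,\lambda>0$. For $(z_1,z_2)\in\mathbb R^d\times\mathbb R^d$ define $x_1=\operatorname{prox}_{\gamma f_1}(z_1)$, $x_2=\operatorname{prox}_{\frac{\gamma}{\alpha}f_2}(\frac{z_2}{\alpha}+x_1)$, $x_3\in\operatorname{prox}_{\gamma f_3}(x_1-z_1+x_2-z_2)$, and the set-valued operator $T_{\gamma}^{\mathrm{Ryu}}(z_1,z_2)=\{(z_1+\lambda(x_3-x_1),\,z_2+\lambda(x_3-x_2))\}$ over such choices of $x_3$. With $\gamma_1:=\frac{\gamma}{\alpha}$, $\gamma_2:=\frac{\gamma}{1-\alpha}$ (convention $c/0=\infty$, $d/\infty=0$), the relaxed Ryu envelope is $$\varphi_{\gamma}^{\mathrm{Ryu}}(z_1,z_2):=\min_{y\in\mathbb R^d}\Big\{f_3(y)+\sum_{i=1}^2\Big[f_i(x_i)+\langle y-x_i,\nabla f_i(x_i)\rangle+\tfrac{1}{2\gamma_i}\|y-x_i\|^2\Big]\Big\}.$$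 $\partial$ denotes the limiting subdifferential. *)

theory Defs
  imports "HOL-Analysis.Analysis"
begin

definition lsc :: "('a::topological_space \<Rightarrow> ereal) \<Rightarrow> bool" where
  "lsc f \<longleftrightarrow> (\<forall>x. f x \<le> Liminf (at x) f)"

definition proper_fun :: "('a \<Rightarrow> ereal) \<Rightarrow> bool" where
  "proper_fun f \<longleftrightarrow> (\<forall>x. f x \<noteq> -\<infinity>) \<and> (\<exists>x. f x \<noteq> \<infinity>)"

definition prox :: "real \<Rightarrow> ('a::real_normed_vector \<Rightarrow> ereal) \<Rightarrow> 'a \<Rightarrow> 'a set" where
  "prox \<gamma> g z = {y. \<forall>w. g y + ereal (norm (y - z)^2 / (2*\<gamma>)) \<le> g w + ereal (norm (w - z)^2 / (2*\<gamma>))}"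

(* the (unique, for convex real-valued f) proximal point *)
definition prox_pt :: "real \<Rightarrow> ('a::real_normed_vector \<Rightarrow> real) \<Rightarrow> 'a \<Rightarrow> 'a" where
  "prox_pt \<gamma> f z = (THE y. y \<in> prox \<gamma> (\<lambda>x. ereal (f x)) z)"

definition ryu_x1 :: "real \<Rightarrow> ('a::real_normed_vector \<Rightarrow> real) \<Rightarrow> 'a \<Rightarrow> 'a" where
  "ryu_x1 \<gamma> f1 z1 = prox_pt \<gamma> f1 z1"

definition ryu_x2 :: "real \<Rightarrow> real \<Rightarrow> ('a::real_normed_vector \<Rightarrow> real) \<Rightarrow> ('a \<Rightarrow> real) \<Rightarrow> 'a \<Rightarrow> 'a \<Rightarrow> 'a" where
  "ryu_x2 \<gamma> \<alpha> f1 f2 z1 z2 = prox_pt (\<gamma>/\<alpha>) f2 ((1/\<alpha>) *\<^sub>R z2 + ryu_x1 \<gamma> f1 z1)"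

definition T_ryu :: "real \<Rightarrow> real \<Rightarrow> real \<Rightarrow> ('a::real_normed_vector \<Rightarrow> real) \<Rightarrow> ('a \<Rightarrow> real)
    \<Rightarrow> ('a \<Rightarrow> ereal) \<Rightarrow> 'a \<times> 'a \<Rightarrow> ('a \<times> 'a) set" where
  "T_ryu lam \<gamma> \<alpha> f1 f2 f3 z =
     (let z1 = fst z; z2 = snd z; x1 = ryu_x1 \<gamma> f1 z1; x2 = ryu_x2 \<gamma> \<alpha> f1 f2 z1 z2 in
      {(z1 + lam *\<^sub>R (x3 - x1), z2 + lam *\<^sub>R (x3 - x2)) | x3. x3 \<in> prox \<gamma> f3 (x1 - z1 + x2 - z2)})"

definition Fix :: "('b \<Rightarrow> 'b set) \<Rightarrow> 'b set" where
  "Fix T = {z. z \<in> T z}"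

(* Relaxed Ryu envelope; 1/(2\<gamma>1) = \<alpha>/(2\<gamma>), 1/(2\<gamma>2) = (1-\<alpha>)/(2\<gamma>) (with c/0=\<infinity>, d/\<infinity>=0).
   df1, df2 are the gradients of f1, f2. *)
definition ryu_env :: "real \<Rightarrow> real \<Rightarrow> ('a::real_inner \<Rightarrow> real) \<Rightarrow> ('a \<Rightarrow> real) \<Rightarrow> ('a \<Rightarrow> ereal)
    \<Rightarrow> ('a \<Rightarrow> 'a) \<Rightarrow> ('a \<Rightarrow> 'a) \<Rightarrow> 'a \<times> 'a \<Rightarrow> ereal" where
  "ryu_env \<gamma> \<alpha> f1 f2 f3 df1 df2 z =
     (let z1 = fst z; z2 = snd z; x1 = ryu_x1 \<gamma> f1 z1; x2 = ryu_x2 \<gamma> \<alpha> f1 f2 z1 z2 in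
      (INF y. f3 y + ereal (f1 x1 + (y - x1) \<bullet> df1 x1 + \<alpha> / (2*\<gamma>) * norm (y - x1)^2
                          + f2 x2 + (y - x2) \<bullet> df2 x2 + (1 - \<alpha>) / (2*\<gamma>) * norm (y - x2)^2)))"

(* Frechet (regular) subdifferential, liminf condition written in epsilon-delta form *)
definition frechet_subdiff :: "('a::real_inner \<Rightarrow> ereal) \<Rightarrow> 'a \<Rightarrow> 'a set" where
  "frechet_subdiff f x = {v. \<bar>f x\<bar> \<noteq> \<infinity> \<and>
     (\<forall>\<epsilon>>0. \<exists>\<delta>>0. \<forall>y. norm (y - x) < \<delta> \<longrightarrow>
        f x + ereal (v \<bullet> (y - x) - \<epsilon> * norm (y - x)) \<le> f y)}"

definition limiting_subdiff :: "('a::real_inner \<Rightarrow> ereal) \<Rightarrow> 'a \<Rightarrow> 'a set" where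
  "limiting_subdiff f x = {v. \<bar>f x\<bar> \<noteq> \<infinity> \<and>
     (\<exists>xs vs. xs \<longlonglongrightarrow> x \<and> (\<lambda>k. f (xs k)) \<longlonglongrightarrow> f x \<and>
        (\<forall>k. vs k \<in> frechet_subdiff f (xs k)) \<and> vs \<longlonglongrightarrow> v)}"

end

theory Submission
  imports Defs
begin


lemma line_deriv:
  fixes f :: "'a::euclidean_space \<Rightarrow> real"
  assumes grad: "\<And>x. (f has_derivative (\<lambda>h. df x \<bullet> h)) (at x)"
  shows "((\<lambda>t. f (x + t *\<^sub>R d)) has_real_derivative (df (x + t *\<^sub>R d) \<bullet> d)) (at t within S)"
proof -
  have l: "((\<lambda>t. x + t *\<^sub>R d) has_derivative (\<lambda>s. s *\<^sub>R d)) (at t within S)"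
    by (auto intro!: derivative_eq_intros)
  have "((\<lambda>t. f (x + t *\<^sub>R d)) has_derivative (\<lambda>s. df (x + t *\<^sub>R d) \<bullet> (s *\<^sub>R d))) (at t within S)"
    using has_derivative_compose[OF l grad[of "x + t *\<^sub>R d"]] by (simp add: o_def)
  moreover have "(\<lambda>s. df (x + t *\<^sub>R d) \<bullet> (s *\<^sub>R d)) = (*) (df (x + t *\<^sub>R d) \<bullet> d)"
    by (auto simp: fun_eq_iff)
  ultimately show ?thesis by (simp add: has_field_derivative_def)
qed

lemma grad_ineq:
  fixes f :: "'a::euclidean_space \<Rightarrow> real"
  assumes conv: "convex_on UNIV f"
    and grad: "\<And>x. (f has_derivative (\<lambda>h. df x \<bullet> h)) (at x)"
  shows "f x + df x \<bullet> (y - x) \<le> f y"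
proof -
  define d where "d = y - x"
  define g where "g = (\<lambda>t::real. f (x + t *\<^sub>R d))"
  have cg: "convex_on UNIV g"
    unfolding convex_on_def g_def
  proof (intro conjI ballI allI impI convex_UNIV)
    fix s t u v :: real assume uv: "0 \<le> u" "0 \<le> v" "u + v = 1"
    have "x + (u *\<^sub>R s + v *\<^sub>R t) *\<^sub>R d = u *\<^sub>R (x + s *\<^sub>R d) + v *\<^sub>R (x + t *\<^sub>R d)"
    proof -
      have "u *\<^sub>R x + v *\<^sub>R x = x" using uv by (metis scaleR_add_left scaleR_one)
      then show ?thesis by (simp add: algebra_simps)
    qed
    moreover have "f (u *\<^sub>R (x + s *\<^sub>R d) + v *\<^sub>R (x + t *\<^sub>R d)) \<le> u * f (x + s *\<^sub>R d) + v * f (x + t *\<^sub>R d)"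
    proof -
      have "u = 1 - v" using uv by simp
      then show ?thesis using convex_onD[OF conv, of v "x + s *\<^sub>R d" "x + t *\<^sub>R d"] uv by (simp only:) simp
    qed
    ultimately show "f (x + (u *\<^sub>R s + v *\<^sub>R t) *\<^sub>R d) \<le> u * f (x + s *\<^sub>R d) + v * f (x + t *\<^sub>R d)"
      by simp
  qed
  have "g 1 - g 0 \<ge> (df (x + 0 *\<^sub>R d) \<bullet> d) * (1 - 0)"
    by (rule convex_on_imp_above_tangent[OF cg]) (use line_deriv[OF grad, of x d 0 UNIV] in \<open>auto simp: g_def\<close>)
  then show ?thesis by (simp add: g_def d_def)
qed

lemma descent:
  fixes f :: "'a::euclidean_space \<Rightarrow> real"
  assumes grad: "\<And>x. (f has_derivative (\<lambda>h. df x \<bullet> h)) (at x)"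
    and lip: "L-lipschitz_on UNIV df"
  shows "f y \<le> f x + df x \<bullet> (y - x) + L / 2 * norm (y - x)^2"
proof -
  define d where "d = y - x"
  define p where "p = (\<lambda>t. f (x + t *\<^sub>R d) - t * (df x \<bullet> d) - L / 2 * t^2 * norm d ^ 2)"
  have "p 1 \<le> p 0"
  proof (rule DERIV_nonpos_imp_nonincreasing[where f=p])
    fix t :: real assume t: "0 \<le> t" "t \<le> 1"
    have "(p has_real_derivative (df (x + t *\<^sub>R d) \<bullet> d - df x \<bullet> d - L / 2 * (2 * t) * norm d ^ 2)) (at t)"
      unfolding p_def
      using line_deriv[OF grad, of x d t UNIV]
      by (intro derivative_eq_intros) auto
    moreover have "df (x + t *\<^sub>R d) \<bullet> d - df x \<bullet> d - L / 2 * (2 * t) * norm d ^ 2 \<le> 0"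
    proof -
      have "df (x + t *\<^sub>R d) \<bullet> d - df x \<bullet> d = (df (x + t *\<^sub>R d) - df x) \<bullet> d"
        by (simp add: inner_diff_left)
      also have "\<dots> \<le> norm (df (x + t *\<^sub>R d) - df x) * norm d"
        by (rule norm_cauchy_schwarz)
      also have "norm (df (x + t *\<^sub>R d) - df x) \<le> L * norm (t *\<^sub>R d)"
        using lipschitz_onD[OF lip, of "x + t *\<^sub>R d" x] by (simp add: dist_norm)
      hence "norm (df (x + t *\<^sub>R d) - df x) * norm d \<le> L * norm (t *\<^sub>R d) * norm d"
        by (simp add: mult_right_mono)
      also have "\<dots> = L / 2 * (2 * t) * norm d ^ 2"
        using t by (simp add: power2_eq_square)
      finally show ?thesis by simp
    qed
    ultimately show "\<exists>y. (p has_real_derivative y) (at t) \<and> y \<le> 0" by blast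
  qed simp
  then show ?thesis by (simp add: p_def d_def)
qed

lemma norm_sq_split:
  fixes a b :: "'a::real_inner"
  shows "norm (a + b)^2 = norm a ^2 + 2 * (a \<bullet> b) + norm b ^2"
  by (simp add: power2_norm_eq_inner inner_add_left inner_add_right inner_commute)

lemma prox_opt_ineq:
  fixes f :: "'a::euclidean_space \<Rightarrow> real"
  assumes conv: "convex_on UNIV f"
    and grad: "\<And>x. (f has_derivative (\<lambda>h. df x \<bullet> h)) (at x)"
    and g: "\<gamma> > 0" and opt: "z - x = \<gamma> *\<^sub>R df x"
  shows "f x + norm (x - z)^2 / (2*\<gamma>) + norm (y - x)^2 / (2*\<gamma>) \<le> f y + norm (y - z)^2 / (2*\<gamma>)"
proof -
  have gi: "f x + df x \<bullet> (y - x) \<le> f y" by (rule grad_ineq[OF conv grad])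
  have "norm (y - z)^2 = norm (y - x)^2 + 2 * ((y - x) \<bullet> (x - z)) + norm (x - z)^2"
    using norm_sq_split[of "y - x" "x - z"] by simp
  moreover have "x - z = - (\<gamma> *\<^sub>R df x)" using opt by (simp add: algebra_simps)
  ultimately have "norm (y - z)^2 = norm (y - x)^2 - 2 * \<gamma> * (df x \<bullet> (y - x)) + norm (x - z)^2"
    by (simp add: inner_commute)
  hence "norm (y - z)^2 / (2*\<gamma>) = norm (y - x)^2 / (2*\<gamma>) - df x \<bullet> (y - x) + norm (x - z)^2 / (2*\<gamma>)"
    using g by (simp add: field_simps)
  with gi show ?thesis by linarith
qed

lemma prox_unique:
  fixes f :: "'a::euclidean_space \<Rightarrow> real"
  assumes conv: "convex_on UNIV f"
    and grad: "\<And>x. (f has_derivative (\<lambda>h. df x \<bullet> h)) (at x)"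
    and g: "\<gamma> > 0" and opt: "z - x = \<gamma> *\<^sub>R df x"
  shows "prox \<gamma> (\<lambda>x. ereal (f x)) z = {x}" "prox_pt \<gamma> f z = x"
proof -
  have ineq: "\<And>y. f x + norm (x - z)^2 / (2*\<gamma>) + norm (y - x)^2 / (2*\<gamma>) \<le> f y + norm (y - z)^2 / (2*\<gamma>)"
    by (rule prox_opt_ineq[OF conv grad g opt])
  have "x \<in> prox \<gamma> (\<lambda>x. ereal (f x)) z"
    unfolding prox_def
  proof (safe)
    fix w
    have "0 \<le> norm (w - x)^2 / (2*\<gamma>)" using g by simp
    then show "ereal (f x) + ereal (norm (x - z)^2 / (2*\<gamma>)) \<le> ereal (f w) + ereal (norm (w - z)^2 / (2*\<gamma>))"
      using ineq[of w] by simp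
  qed
  moreover have "y = x" if "y \<in> prox \<gamma> (\<lambda>x. ereal (f x)) z" for y
  proof -
    have "f y + norm (y - z)^2 / (2*\<gamma>) \<le> f x + norm (x - z)^2 / (2*\<gamma>)"
      using that unfolding prox_def by force
    with ineq[of y] have "norm (y - x)^2 / (2*\<gamma>) \<le> 0" by linarith
    hence "norm (y - x)^2 \<le> 0" using g by (simp add: divide_le_0_iff)
    thus "y = x" by simp
  qed
  ultimately show P: "prox \<gamma> (\<lambda>x. ereal (f x)) z = {x}" by blast
  show "prox_pt \<gamma> f z = x" unfolding prox_pt_def P by simp
qed

lemma prox_exists:
  fixes f :: "'a::euclidean_space \<Rightarrow> real"
  assumes conv: "convex_on UNIV f"
    and grad: "\<And>x. (f has_derivative (\<lambda>h. df x \<bullet> h)) (at x)"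
    and g: "\<gamma> > 0"
  shows "\<exists>x. z - x = \<gamma> *\<^sub>R df x"
proof -
  define h where "h = (\<lambda>y. f y + ((y - z) \<bullet> (y - z)) / (2*\<gamma>))"
  define R where "R = 2 * \<gamma> * norm (df z) + 1"
  have cf: "continuous_on UNIV f"
    using grad has_derivative_continuous continuous_at_imp_continuous_on by blast
  have ch: "continuous_on (cball z R) h"
    unfolding h_def
    using g by (intro continuous_intros continuous_on_subset[OF cf]) auto
  have "R > 0" unfolding R_def using g by (simp add: add_nonneg_pos)
  then obtain x where xin: "x \<in> cball z R" and xmin: "\<forall>y\<in>cball z R. h x \<le> h y"
    using continuous_attains_inf[OF compact_cball _ ch] by fastforce
  have hz: "h z = f z" unfolding h_def by simp
  have xmin': "h x \<le> h y" for y
  proof (cases "y \<in> cball z R")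
    case True then show ?thesis using xmin by blast
  next
    case False
    hence yR: "norm (y - z) > R" by (simp add: dist_norm norm_minus_commute)
    have gi: "f z + df z \<bullet> (y - z) \<le> f y" by (rule grad_ineq[OF conv grad])
    have cs: "- (norm (df z) * norm (y - z)) \<le> df z \<bullet> (y - z)"
      using norm_cauchy_schwarz[of "- df z" "y - z"] by simp
    have "norm (y - z) > 2 * \<gamma> * norm (df z)" using yR unfolding R_def by simp
    hence "norm (y - z) / (2*\<gamma>) > norm (df z)" using g by (simp add: field_simps)
    moreover have "norm (y - z) > 0" using yR \<open>R > 0\<close> by linarith
    ultimately have "norm (y - z) * (norm (y - z) / (2*\<gamma>)) > norm (y - z) * norm (df z)"
      by (intro mult_strict_left_mono)
    hence "norm (y - z)^2 / (2*\<gamma>) > norm (df z) * norm (y - z)"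
      by (simp add: power2_eq_square mult.commute)
    hence "h y > f z"
      unfolding h_def using gi cs by (simp add: power2_norm_eq_inner[symmetric])
    moreover have "h x \<le> h z" using xmin \<open>R > 0\<close> by simp
    ultimately show ?thesis using hz by simp
  qed
  have D: "(h has_derivative (\<lambda>k. df x \<bullet> k + (k \<bullet> (x - z) + (x - z) \<bullet> k) / (2*\<gamma>))) (at x)"
    unfolding h_def
    using g by (auto intro!: derivative_eq_intros grad simp: add_divide_distrib)
  have "(\<lambda>k. df x \<bullet> k + (k \<bullet> (x - z) + (x - z) \<bullet> k) / (2*\<gamma>)) = (\<lambda>v. 0)"
    by (rule differential_zero_maxmin[OF _ open_UNIV D]) (use xmin' in auto)
  then have "\<And>k. df x \<bullet> k + ((x - z) \<bullet> k) / \<gamma> = 0"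
  proof -
    fix k
    assume E: "(\<lambda>k. df x \<bullet> k + (k \<bullet> (x - z) + (x - z) \<bullet> k) / (2*\<gamma>)) = (\<lambda>v. 0)"
    have "df x \<bullet> k + (k \<bullet> (x - z) + (x - z) \<bullet> k) / (2*\<gamma>) = 0" using fun_cong[OF E, of k] by simp
    moreover have "k \<bullet> (x - z) = (x - z) \<bullet> k" by (rule inner_commute)
    ultimately show "df x \<bullet> k + ((x - z) \<bullet> k) / \<gamma> = 0" by simp
  qed
  from this[of "\<gamma> *\<^sub>R df x + (x - z)"]
  have e1: "\<gamma> * (df x \<bullet> (\<gamma> *\<^sub>R df x + (x - z))) + (x - z) \<bullet> (\<gamma> *\<^sub>R df x + (x - z)) = 0"
    using g by (simp add: field_simps)
  have "(\<gamma> *\<^sub>R df x + (x - z)) \<bullet> (\<gamma> *\<^sub>R df x + (x - z)) = 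
     \<gamma> * (df x \<bullet> (\<gamma> *\<^sub>R df x + (x - z))) + (x - z) \<bullet> (\<gamma> *\<^sub>R df x + (x - z))"
    by (simp only: inner_add_left inner_scaleR_left)
  with e1 have "(\<gamma> *\<^sub>R df x + (x - z)) \<bullet> (\<gamma> *\<^sub>R df x + (x - z)) = 0" by simp
  hence "\<gamma> *\<^sub>R df x + (x - z) = 0" by simp
  hence "z - x = \<gamma> *\<^sub>R df x" by (simp add: algebra_simps)
  thus ?thesis by blast
qed

lemma sq_id:
  fixes x y g :: "'a::real_inner"
  assumes g: "\<gamma> > 0"
  shows "norm (y - (x - \<gamma> *\<^sub>R g))^2 / (2*\<gamma>) = norm (x - (x - \<gamma> *\<^sub>R g))^2 / (2*\<gamma>) + g \<bullet> (y - x) + norm (y - x)^2 / (2*\<gamma>)"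
proof -
  have "norm (y - (x - \<gamma> *\<^sub>R g))^2 = norm (y - x)^2 + 2 * ((y - x) \<bullet> (\<gamma> *\<^sub>R g)) + norm (\<gamma> *\<^sub>R g)^2"
    using norm_sq_split[of "y - x" "\<gamma> *\<^sub>R g"] by (simp add: algebra_simps)
  moreover have "(y - x) \<bullet> (\<gamma> *\<^sub>R g) = \<gamma> * (g \<bullet> (y - x))" by (simp add: inner_commute)
  ultimately show ?thesis using g by (simp add: field_simps)
qed

lemma f3_prox:
  fixes f3 :: "'a::real_inner \<Rightarrow> ereal"
  assumes p: "proper_fun f3" and g: "\<gamma> > 0"
    and xp: "x \<in> prox \<gamma> f3 (x - \<gamma> *\<^sub>R v)"
  shows "\<exists>s. f3 x = ereal s"
    and "\<And>y s r. f3 x = ereal s \<Longrightarrow> f3 y = ereal r \<Longrightarrow> s \<le> r + v \<bullet> (y - x) + norm (y - x)^2 / (2*\<gamma>)"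
proof -
  have P: "\<And>w. f3 x + ereal (norm (x - (x - \<gamma> *\<^sub>R v))^2 / (2*\<gamma>)) \<le> f3 w + ereal (norm (w - (x - \<gamma> *\<^sub>R v))^2 / (2*\<gamma>))"
    using xp unfolding prox_def by blast
  obtain y0 where y0: "f3 y0 \<noteq> \<infinity>" using p unfolding proper_fun_def by blast
  have nm: "f3 x \<noteq> -\<infinity>" using p unfolding proper_fun_def by blast
  have "f3 x \<noteq> \<infinity>"
  proof
    assume "f3 x = \<infinity>"
    with P[of y0] have "f3 y0 + ereal (norm (y0 - (x - \<gamma> *\<^sub>R v))^2 / (2*\<gamma>)) = \<infinity>" by simp
    with y0 show False by simp
  qed
  with nm show "\<exists>s. f3 x = ereal s" by (cases "f3 x") auto
  fix y s r assume s: "f3 x = ereal s" and r: "f3 y = ereal r"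
  from P[of y] s r have "s + norm (x - (x - \<gamma> *\<^sub>R v))^2 / (2*\<gamma>) \<le> r + norm (y - (x - \<gamma> *\<^sub>R v))^2 / (2*\<gamma>)"
    by simp
  with sq_id[OF g, of y x v] show "s \<le> r + v \<bullet> (y - x) + norm (y - x)^2 / (2*\<gamma>)" by linarith
qed

lemma part2:
  fixes f1 f2 :: "'a::euclidean_space \<Rightarrow> real" and f3 :: "'a \<Rightarrow> ereal"
  assumes conv1: "convex_on UNIV f1" and conv2: "convex_on UNIV f2"
    and grad1: "\<And>x. (f1 has_derivative (\<lambda>h. df1 x \<bullet> h)) (at x)"
    and grad2: "\<And>x. (f2 has_derivative (\<lambda>h. df2 x \<bullet> h)) (at x)"
    and p: "proper_fun f3" and g: "\<gamma> > 0" and a: "\<alpha> > 0"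
    and x1: "x = ryu_x1 \<gamma> f1 z1" and x2: "x = ryu_x2 \<gamma> \<alpha> f1 f2 z1 z2"
    and x3: "x \<in> prox \<gamma> f3 (ryu_x1 \<gamma> f1 z1 - z1 + ryu_x2 \<gamma> \<alpha> f1 f2 z1 z2 - z2)"
  shows "0 \<in> limiting_subdiff (\<lambda>x. ereal (f1 x + f2 x) + f3 x) x
         \<and> ereal (f1 x + f2 x) + f3 x = ryu_env \<gamma> \<alpha> f1 f2 f3 df1 df2 (z1, z2)"
proof -
  obtain u where u: "z1 - u = \<gamma> *\<^sub>R df1 u" using prox_exists[OF conv1 grad1 g] by blast
  have "ryu_x1 \<gamma> f1 z1 = u" unfolding ryu_x1_def by (rule prox_unique(2)[OF conv1 grad1 g u])
  hence o1: "z1 - x = \<gamma> *\<^sub>R df1 x" using u x1 by simp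
  have ga: "\<gamma> / \<alpha> > 0" using g a by simp
  obtain u2 where u2: "((1/\<alpha>) *\<^sub>R z2 + x) - u2 = (\<gamma>/\<alpha>) *\<^sub>R df2 u2"
    using prox_exists[OF conv2 grad2 ga] by blast
  have "ryu_x2 \<gamma> \<alpha> f1 f2 z1 z2 = u2" unfolding ryu_x2_def x1[symmetric]
    by (rule prox_unique(2)[OF conv2 grad2 ga u2])
  hence "(1/\<alpha>) *\<^sub>R z2 = (\<gamma>/\<alpha>) *\<^sub>R df2 x" using u2 x2 by simp
  hence "\<alpha> *\<^sub>R ((1/\<alpha>) *\<^sub>R z2) = \<alpha> *\<^sub>R ((\<gamma>/\<alpha>) *\<^sub>R df2 x)" by simp
  hence o2: "z2 = \<gamma> *\<^sub>R df2 x" using a by simp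
  define v where "v = df1 x + df2 x"
  have arg: "ryu_x1 \<gamma> f1 z1 - z1 + ryu_x2 \<gamma> \<alpha> f1 f2 z1 z2 - z2 = x - \<gamma> *\<^sub>R v"
    unfolding v_def using o1 o2 x1 x2 by (simp add: algebra_simps)
  have xp: "x \<in> prox \<gamma> f3 (x - \<gamma> *\<^sub>R v)" using x3 arg by simp
  obtain s where s: "f3 x = ereal s" using f3_prox(1)[OF p g xp] by blast
  have key: "\<And>y r. f3 y = ereal r \<Longrightarrow> s \<le> r + v \<bullet> (y - x) + norm (y - x)^2 / (2*\<gamma>)"
    using f3_prox(2)[OF p g xp s] by blast
  have nm: "\<And>y. f3 y \<noteq> -\<infinity>" using p unfolding proper_fun_def by blast
  have gi: "\<And>y. f1 x + f2 x + v \<bullet> (y - x) \<le> f1 y + f2 y"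
    using grad_ineq[OF conv1 grad1] grad_ineq[OF conv2 grad2] unfolding v_def
    by (smt (verit) inner_add_left)
  have fr: "0 \<in> frechet_subdiff (\<lambda>x. ereal (f1 x + f2 x) + f3 x) x"
    unfolding frechet_subdiff_def mem_Collect_eq
  proof (intro conjI allI impI)
    show "\<bar>ereal (f1 x + f2 x) + f3 x\<bar> \<noteq> \<infinity>" using s by simp
    fix e :: real assume e: "e > 0"
    show "\<exists>d>0. \<forall>y. norm (y - x) < d \<longrightarrow>
          ereal (f1 x + f2 x) + f3 x + ereal (0 \<bullet> (y - x) - e * norm (y - x)) \<le> ereal (f1 y + f2 y) + f3 y"
    proof (intro exI[of _ "2*\<gamma>*e"] conjI allI impI)
      show "0 < 2*\<gamma>*e" using g e by simp
      fix y assume y: "norm (y - x) < 2*\<gamma>*e"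
      show "ereal (f1 x + f2 x) + f3 x + ereal (0 \<bullet> (y - x) - e * norm (y - x)) \<le> ereal (f1 y + f2 y) + f3 y"
      proof (cases "f3 y")
        case (real r)
        have "norm (y - x)^2 = norm (y - x) * norm (y - x)" by (simp add: power2_eq_square)
        also have "\<dots> \<le> norm (y - x) * (2*\<gamma>*e)" using y by (intro mult_left_mono) auto
        finally have "norm (y - x)^2 / (2*\<gamma>) \<le> e * norm (y - x)" using g by (simp add: field_simps)
        with key[OF real] gi[of y] have "f1 x + f2 x + s - e * norm (y - x) \<le> f1 y + f2 y + r" by linarith
        then show ?thesis using s real by simp
      next
        case PInf then show ?thesis by simp
      next
        case MInf then show ?thesis using nm by simp
      qed
    qed
  qed
  have lim: "0 \<in> limiting_subdiff (\<lambda>x. ereal (f1 x + f2 x) + f3 x) x"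
    unfolding limiting_subdiff_def
    using s fr by (intro CollectI conjI exI[of _ "\<lambda>k. x"] exI[of _ "\<lambda>k. 0"]) auto
  have env: "ryu_env \<gamma> \<alpha> f1 f2 f3 df1 df2 (z1, z2) =
     (INF y. f3 y + ereal (f1 x + (y - x) \<bullet> df1 x + \<alpha> / (2*\<gamma>) * norm (y - x)^2
                          + f2 x + (y - x) \<bullet> df2 x + (1 - \<alpha>) / (2*\<gamma>) * norm (y - x)^2))"
    unfolding ryu_env_def Let_def using x1 x2 by simp
  have term_eq: "\<And>y. f1 x + (y - x) \<bullet> df1 x + \<alpha> / (2*\<gamma>) * norm (y - x)^2
                          + f2 x + (y - x) \<bullet> df2 x + (1 - \<alpha>) / (2*\<gamma>) * norm (y - x)^2
        = f1 x + f2 x + v \<bullet> (y - x) + norm (y - x)^2 / (2*\<gamma>)"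
    unfolding v_def using g by (simp add: field_simps inner_add_left inner_add_right inner_commute)
  have "(INF y. f3 y + ereal (f1 x + (y - x) \<bullet> df1 x + \<alpha> / (2*\<gamma>) * norm (y - x)^2
                          + f2 x + (y - x) \<bullet> df2 x + (1 - \<alpha>) / (2*\<gamma>) * norm (y - x)^2))
       = ereal (f1 x + f2 x) + f3 x"
    unfolding term_eq
  proof (rule antisym)
    show "(INF y. f3 y + ereal (f1 x + f2 x + v \<bullet> (y - x) + norm (y - x)^2 / (2*\<gamma>))) \<le> ereal (f1 x + f2 x) + f3 x"
      by (rule order_trans[OF INF_lower[of x]]) (auto simp: s)
    show "ereal (f1 x + f2 x) + f3 x \<le> (INF y. f3 y + ereal (f1 x + f2 x + v \<bullet> (y - x) + norm (y - x)^2 / (2*\<gamma>)))"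
    proof (rule INF_greatest)
      fix y
      show "ereal (f1 x + f2 x) + f3 x \<le> f3 y + ereal (f1 x + f2 x + v \<bullet> (y - x) + norm (y - x)^2 / (2*\<gamma>))"
      proof (cases "f3 y")
        case (real r)
        then show ?thesis using key[OF real] s by simp
      next
        case PInf then show ?thesis using s by simp
      next
        case MInf then show ?thesis using nm by simp
      qed
    qed
  qed
  with env lim show ?thesis by simp
qed



theorem proposition4:
  fixes f1 f2 :: "'a::euclidean_space \<Rightarrow> real"
    and f3 :: "'a \<Rightarrow> ereal"
    and df1 df2 :: "'a \<Rightarrow> 'a"
    and L1 L2 \<gamma> \<alpha> lam :: real
    and z1 z2 :: 'a
  defines "\<phi> \<equiv> (\<lambda>x. ereal (f1 x + f2 x) + f3 x)"
  assumes conv1: "convex_on UNIV f1" and conv2: "convex_on UNIV f2"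
    and grad1: "\<And>x. (f1 has_derivative (\<lambda>h. df1 x \<bullet> h)) (at x)"
    and grad2: "\<And>x. (f2 has_derivative (\<lambda>h. df2 x \<bullet> h)) (at x)"
    and L1: "L1 > 0" "L1-lipschitz_on UNIV df1"
    and L2: "L2 > 0" "L2-lipschitz_on UNIV df2"
    and f3: "proper_fun f3" "lsc f3"
    and sol: "\<exists>x. \<forall>y. \<phi> x \<le> \<phi> y"
    and gam: "0 < \<gamma>" "\<gamma> < 1 / (L1 + L2)"
    and pos: "\<alpha> > 0" "lam > 0"
  shows
    "((z1, z2) \<in> Fix (T_ryu lam \<gamma> \<alpha> f1 f2 f3) \<longleftrightarrow>
        (\<exists>x3 \<in> prox \<gamma> f3 (ryu_x1 \<gamma> f1 z1 - z1 + ryu_x2 \<gamma> \<alpha> f1 f2 z1 z2 - z2).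
            ryu_x1 \<gamma> f1 z1 = ryu_x2 \<gamma> \<alpha> f1 f2 z1 z2 \<and> ryu_x2 \<gamma> \<alpha> f1 f2 z1 z2 = x3))
     \<and> (\<forall>x. (x = ryu_x1 \<gamma> f1 z1 \<and> x = ryu_x2 \<gamma> \<alpha> f1 f2 z1 z2 \<and>
              x \<in> prox \<gamma> f3 (ryu_x1 \<gamma> f1 z1 - z1 + ryu_x2 \<gamma> \<alpha> f1 f2 z1 z2 - z2))
           \<longrightarrow> 0 \<in> limiting_subdiff \<phi> x \<and> \<phi> x = ryu_env \<gamma> \<alpha> f1 f2 f3 df1 df2 (z1, z2))
     \<and> ((\<alpha> < 1 \<and> \<gamma> \<le> min (\<alpha> / L1) ((1 - \<alpha>) / L2)) \<longrightarrow>
          (\<exists>xm zm. (\<forall>x. \<phi> xm \<le> \<phi> x) \<and> (\<forall>z. ryu_env \<gamma> \<alpha> f1 f2 f3 df1 df2 zm \<le> ryu_env \<gamma> \<alpha> f1 f2 f3 df1 df2 z)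
                   \<and> \<phi> xm = ryu_env \<gamma> \<alpha> f1 f2 f3 df1 df2 zm))"
  proof -
  let ?x1 = "ryu_x1 \<gamma> f1 z1"
  let ?x2 = "ryu_x2 \<gamma> \<alpha> f1 f2 z1 z2"
  let ?P = "prox \<gamma> f3 (ryu_x1 \<gamma> f1 z1 - z1 + ryu_x2 \<gamma> \<alpha> f1 f2 z1 z2 - z2)"
  have nm: "\<And>y. f3 y \<noteq> -\<infinity>" using f3(1) unfolding proper_fun_def by blast
  have A: "(z1, z2) \<in> Fix (T_ryu lam \<gamma> \<alpha> f1 f2 f3) \<longleftrightarrow>
        (\<exists>x3 \<in> ?P. ?x1 = ?x2 \<and> ?x2 = x3)"
  proof -
    have "(z1, z2) \<in> Fix (T_ryu lam \<gamma> \<alpha> f1 f2 f3) \<longleftrightarrow>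
          (\<exists>x3. z1 = z1 + lam *\<^sub>R (x3 - ?x1) \<and> z2 = z2 + lam *\<^sub>R (x3 - ?x2) \<and> x3 \<in> ?P)"
      unfolding Fix_def T_ryu_def Let_def by auto
    also have "\<dots> \<longleftrightarrow> (\<exists>x3 \<in> ?P. ?x1 = ?x2 \<and> ?x2 = x3)"
      using pos(2) by auto
    finally show ?thesis .
  qed
  have B: "\<forall>x. (x = ?x1 \<and> x = ?x2 \<and> x \<in> ?P)
           \<longrightarrow> 0 \<in> limiting_subdiff \<phi> x \<and> \<phi> x = ryu_env \<gamma> \<alpha> f1 f2 f3 df1 df2 (z1, z2)"
    unfolding \<phi>_def using part2[OF conv1 conv2 grad1 grad2 f3(1) gam(1) pos(1)] by blast
  have C: "(\<alpha> < 1 \<and> \<gamma> \<le> min (\<alpha> / L1) ((1 - \<alpha>) / L2)) \<longrightarrow>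
          (\<exists>xm zm. (\<forall>x. \<phi> xm \<le> \<phi> x) \<and> (\<forall>z. ryu_env \<gamma> \<alpha> f1 f2 f3 df1 df2 zm \<le> ryu_env \<gamma> \<alpha> f1 f2 f3 df1 df2 z)
                   \<and> \<phi> xm = ryu_env \<gamma> \<alpha> f1 f2 f3 df1 df2 zm)"
  proof
    assume H: "\<alpha> < 1 \<and> \<gamma> \<le> min (\<alpha> / L1) ((1 - \<alpha>) / L2)"
    obtain xm where xm: "\<forall>y. \<phi> xm \<le> \<phi> y" using sol by blast
    obtain y0 where y0: "f3 y0 \<noteq> \<infinity>" using f3(1) unfolding proper_fun_def by blast
    have "f3 xm \<noteq> \<infinity>"
    proof
      assume "f3 xm = \<infinity>"
      hence "\<phi> xm = \<infinity>" unfolding \<phi>_def by simp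
      moreover have "\<phi> xm \<le> \<phi> y0" using xm by blast
      ultimately have "\<phi> y0 = \<infinity>" by simp
      with y0 nm[of y0] show False unfolding \<phi>_def by (cases "f3 y0") auto
    qed
    then obtain s where s: "f3 xm = ereal s" using nm[of xm] by (cases "f3 xm") auto
    define v where "v = df1 xm + df2 xm"
    define zm where "zm = (xm + \<gamma> *\<^sub>R df1 xm, \<gamma> *\<^sub>R df2 xm)"
    have ga: "\<gamma> / \<alpha> > 0" using gam(1) pos(1) by simp
    have X1: "ryu_x1 \<gamma> f1 (fst zm) = xm"
      unfolding ryu_x1_def zm_def by (rule prox_unique(2)[OF conv1 grad1 gam(1)]) simp
    have X2: "ryu_x2 \<gamma> \<alpha> f1 f2 (fst zm) (snd zm) = xm"
      unfolding ryu_x2_def X1 by (rule prox_unique(2)[OF conv2 grad2 ga]) (simp add: zm_def)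
    have gL: "\<gamma> * (L1 + L2) < 1" using gam L1(1) L2(1) by (simp add: field_simps)
    have X3: "xm \<in> prox \<gamma> f3 (ryu_x1 \<gamma> f1 (fst zm) - fst zm + ryu_x2 \<gamma> \<alpha> f1 f2 (fst zm) (snd zm) - snd zm)"
    proof -
      have arg: "ryu_x1 \<gamma> f1 (fst zm) - fst zm + ryu_x2 \<gamma> \<alpha> f1 f2 (fst zm) (snd zm) - snd zm = xm - \<gamma> *\<^sub>R v"
        unfolding X1 X2 by (simp add: zm_def v_def algebra_simps)
      show ?thesis unfolding arg prox_def mem_Collect_eq
      proof
        fix w
        show "f3 xm + ereal (norm (xm - (xm - \<gamma> *\<^sub>R v))^2 / (2*\<gamma>)) \<le> f3 w + ereal (norm (w - (xm - \<gamma> *\<^sub>R v))^2 / (2*\<gamma>))"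
        proof (cases "f3 w")
          case (real r)
          have "\<phi> xm \<le> \<phi> w" using xm by blast
          hence phi: "f1 xm + f2 xm + s \<le> f1 w + f2 w + r" unfolding \<phi>_def using s real by simp
          have d1: "f1 w \<le> f1 xm + df1 xm \<bullet> (w - xm) + L1 / 2 * norm (w - xm)^2"
            by (rule descent[OF grad1 L1(2)])
          have d2: "f2 w \<le> f2 xm + df2 xm \<bullet> (w - xm) + L2 / 2 * norm (w - xm)^2"
            by (rule descent[OF grad2 L2(2)])
          have "(L1 + L2) / 2 * norm (w - xm)^2 \<le> norm (w - xm)^2 / (2*\<gamma>)"
          proof -
            have "(L1 + L2) / 2 \<le> 1 / (2*\<gamma>)" using gL gam(1) by (simp add: field_simps)
            then show ?thesis by (metis mult_right_mono zero_le_power2 times_divide_eq_left mult_1)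
          qed
          with d1 d2 phi have "s \<le> r + v \<bullet> (w - xm) + norm (w - xm)^2 / (2*\<gamma>)"
            unfolding v_def by (simp add: inner_add_left algebra_simps)
          then show ?thesis using s real sq_id[OF gam(1), of w xm v] by simp
        next
          case PInf then show ?thesis using s by simp
        next
          case MInf then show ?thesis using nm by simp
        qed
      qed
    qed
    have eq: "\<phi> xm = ryu_env \<gamma> \<alpha> f1 f2 f3 df1 df2 zm"
      using part2[OF conv1 conv2 grad1 grad2 f3(1) gam(1) pos(1) X1[symmetric] X2[symmetric] X3]
      unfolding \<phi>_def by simp
    have lb: "\<phi> xm \<le> ryu_env \<gamma> \<alpha> f1 f2 f3 df1 df2 z" for z
    proof -
      let ?a = "ryu_x1 \<gamma> f1 (fst z)"
      let ?b = "ryu_x2 \<gamma> \<alpha> f1 f2 (fst z) (snd z)"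
      have c1: "L1 / 2 \<le> \<alpha> / (2*\<gamma>)"
      proof -
        have "\<gamma> \<le> \<alpha> / L1" using H by simp
        hence "\<gamma> * L1 \<le> \<alpha>" using L1(1) by (simp add: field_simps)
        thus ?thesis using gam(1) by (simp add: field_simps)
      qed
      have c2: "L2 / 2 \<le> (1 - \<alpha>) / (2*\<gamma>)"
      proof -
        have "\<gamma> \<le> (1 - \<alpha>) / L2" using H by simp
        hence "\<gamma> * L2 \<le> 1 - \<alpha>" using L2(1) by (simp add: field_simps)
        thus ?thesis using gam(1) by (simp add: field_simps)
      qed
      show ?thesis unfolding ryu_env_def Let_def
      proof (rule INF_greatest)
        fix y
        have d1: "f1 y \<le> f1 ?a + df1 ?a \<bullet> (y - ?a) + L1 / 2 * norm (y - ?a)^2"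
          by (rule descent[OF grad1 L1(2)])
        have d2: "f2 y \<le> f2 ?b + df2 ?b \<bullet> (y - ?b) + L2 / 2 * norm (y - ?b)^2"
          by (rule descent[OF grad2 L2(2)])
        have e1: "L1 / 2 * norm (y - ?a)^2 \<le> \<alpha> / (2*\<gamma>) * norm (y - ?a)^2"
          using c1 by (rule mult_right_mono) simp
        have e2: "L2 / 2 * norm (y - ?b)^2 \<le> (1 - \<alpha>) / (2*\<gamma>) * norm (y - ?b)^2"
          using c2 by (rule mult_right_mono) simp
        have "f1 y + f2 y \<le> f1 ?a + (y - ?a) \<bullet> df1 ?a + \<alpha> / (2*\<gamma>) * norm (y - ?a)^2
                          + f2 ?b + (y - ?b) \<bullet> df2 ?b + (1 - \<alpha>) / (2*\<gamma>) * norm (y - ?b)^2"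
          using d1 d2 e1 e2 by (simp add: inner_commute)
        hence "\<phi> y \<le> f3 y + ereal (f1 ?a + (y - ?a) \<bullet> df1 ?a + \<alpha> / (2*\<gamma>) * norm (y - ?a)^2
                          + f2 ?b + (y - ?b) \<bullet> df2 ?b + (1 - \<alpha>) / (2*\<gamma>) * norm (y - ?b)^2)"
          unfolding \<phi>_def by (metis add.commute add_right_mono ereal_less_eq(3))
        moreover have "\<phi> xm \<le> \<phi> y" using xm by blast
        ultimately show "\<phi> xm \<le> f3 y + ereal (f1 ?a + (y - ?a) \<bullet> df1 ?a + \<alpha> / (2*\<gamma>) * norm (y - ?a)^2
                          + f2 ?b + (y - ?b) \<bullet> df2 ?b + (1 - \<alpha>) / (2*\<gamma>) * norm (y - ?b)^2)"
          by (meson order_trans)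
      qed
    qed
    show "\<exists>xm zm. (\<forall>x. \<phi> xm \<le> \<phi> x) \<and> (\<forall>z. ryu_env \<gamma> \<alpha> f1 f2 f3 df1 df2 zm \<le> ryu_env \<gamma> \<alpha> f1 f2 f3 df1 df2 z)
                   \<and> \<phi> xm = ryu_env \<gamma> \<alpha> f1 f2 f3 df1 df2 zm"
      using xm eq lb by metis
  qed
  show ?thesis using A B C by blast
qed

end
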